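(* Let $X,Y,Z$ be spaces, let $r\colon Y\to Z$ be a surjective continuous map, and let $r_{\ast}\colon Q_{P}(X,Y)\to Q_{P}(X,Z)$ be the induced map $r_{\ast}(f)=r\circ f$. Then $r_{\ast}(Q_{P}(X,Y))$ is dense in $Q_{P}(X,Z)$.
   Context: A function $f\colon X\to Y$ between topological spaces is quasi-continuous at $x\in X$ if for every open $U\ni x$ and every open $V\ni f(x)$ there is a non-empty open $G\subseteq U$ with $f(G)\subseteq V$; $f$ is quasi-continuous if it is so at every point. $Q_{P}(X,Y)$ is the set of quasi-continuous functions $X\to Y$ with the topology of point-wise convergence, whose base consists of the sets $[x_1,\dots,x_n;U_1,\dots,U_n]=\{f: f(x_i)\in U_i,\ 1\le i\le n\}$ with $x_i\in X$, $U_i$ open in $Y$; similarly for $Q_P(X,Z)$. *)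

theory Defs
  imports "HOL-Analysis.Analysis"
begin

definition quasi_continuous_at :: "'a topology \<Rightarrow> 'b topology \<Rightarrow> ('a \<Rightarrow> 'b) \<Rightarrow> 'a \<Rightarrow> bool" where
  "quasi_continuous_at X Y f x \<longleftrightarrow>
     (\<forall>U V. openin X U \<and> x \<in> U \<and> openin Y V \<and> f x \<in> V \<longrightarrow>
        (\<exists>G. openin X G \<and> G \<noteq> {} \<and> G \<subseteq> U \<and> f ` G \<subseteq> V))"

definition quasi_continuous :: "'a topology \<Rightarrow> 'b topology \<Rightarrow> ('a \<Rightarrow> 'b) \<Rightarrow> bool" where
  "quasi_continuous X Y f \<longleftrightarrow>
     f \<in> topspace X \<rightarrow> topspace Y \<and> (\<forall>x\<in>topspace X. quasi_continuous_at X Y f x)"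

definition QC :: "'a topology \<Rightarrow> 'b topology \<Rightarrow> ('a \<Rightarrow> 'b) set" where
  "QC X Y = {f. quasi_continuous X Y f \<and> f \<in> extensional (topspace X)}"

text \<open>Q_P(X,Y): topology of pointwise convergence, i.e. the subspace topology
  induced by the Tychonoff product of copies of Y indexed by the points of X.\<close>
definition QP :: "'a topology \<Rightarrow> 'b topology \<Rightarrow> ('a \<Rightarrow> 'b) topology" where
  "QP X Y = subtopology (product_topology (\<lambda>_. Y) (topspace X)) (QC X Y)"

definition induced_map :: "'a topology \<Rightarrow> ('b \<Rightarrow> 'c) \<Rightarrow> ('a \<Rightarrow> 'b) \<Rightarrow> ('a \<Rightarrow> 'c)" where
  "induced_map X r f = restrict (r \<circ> f) (topspace X)"

end

theory Submission
  imports Defs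
begin

lemma split_lemma:
  assumes "finite A" and "\<And>p. openin X (O' p)"
  shows "openin X G \<Longrightarrow> G \<noteq> {} \<Longrightarrow> \<exists>T H. T \<subseteq> A \<and> openin X H \<and> H \<noteq> {} \<and> H \<subseteq> G \<and>
           (\<forall>p\<in>T. H \<subseteq> O' p) \<and> (\<forall>p\<in>A-T. H \<inter> X closure_of (O' p) = {})"
  using assms(1)
proof (induction A arbitrary: G rule: finite_induct)
  case empty
  show ?case
    apply (rule exI[of _ "{}"])
    apply (rule exI[of _ G])
    using empty by simp
next
  case (insert a A)
  obtain T H where TH: "T \<subseteq> A" "openin X H" "H \<noteq> {}" "H \<subseteq> G"
    "\<forall>p\<in>T. H \<subseteq> O' p" "\<forall>p\<in>A-T. H \<inter> X closure_of (O' p) = {}"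
    using insert.IH[OF insert.prems] by blast
  show ?case
  proof (cases "H \<inter> O' a = {}")
    case True
    then have Ha: "H \<inter> X closure_of (O' a) = {}"
      using openin_Int_closure_of_eq_empty[OF TH(2)] by blast
    have "T \<subseteq> insert a A" using TH(1) by blast
    moreover have "\<forall>p\<in>insert a A - T. H \<inter> X closure_of (O' p) = {}"
      using TH(6) Ha by blast
    ultimately show ?thesis using TH(2-5) by blast
  next
    case False
    have "openin X (H \<inter> O' a)" using TH(2) assms(2) by blast
    moreover have "insert a T \<subseteq> insert a A" using TH(1) by blast
    moreover have "H \<inter> O' a \<subseteq> G" using TH(4) by blast
    moreover have "\<forall>p\<in>insert a T. H \<inter> O' a \<subseteq> O' p" using TH(5) by blast
    moreover have "\<forall>p\<in>insert a A - insert a T. H \<inter> O' a \<inter> X closure_of (O' p) = {}"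
      using TH(6) by blast
    ultimately show ?thesis using False by blast
  qed
qed

lemma approx:
  assumes g: "quasi_continuous X Z g"
    and r: "continuous_map Y Z r" and sr: "r ` topspace Y = topspace Z"
    and F: "finite F" "F \<subseteq> topspace X"
    and U: "\<And>p. p \<in> F \<Longrightarrow> openin Z (U p) \<and> g p \<in> U p"
  shows "\<exists>f. quasi_continuous X Y f \<and> f \<in> extensional (topspace X) \<and> (\<forall>p\<in>F. r (f p) \<in> U p)"
proof -
  define Op where "Op p = X interior_of {z \<in> topspace X. g z \<in> U p}" for p
  define R where "R T = X interior_of {x\<in>topspace X. (\<forall>p\<in>T. x \<in> Op p) \<and> (\<forall>p\<in>F-T. x \<notin> X closure_of Op p)}" for T
  have OOpen: "openin X (Op p)" for p unfolding Op_def by simp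
  have Ropen: "openin X (R T)" for T unfolding R_def by simp
  have Rsub: "R T \<subseteq> {x\<in>topspace X. (\<forall>p\<in>T. x \<in> Op p) \<and> (\<forall>p\<in>F-T. x \<notin> X closure_of Op p)}" for T
    unfolding R_def by (rule interior_of_subset)
  have RO: "z \<in> R T \<Longrightarrow> p \<in> T \<Longrightarrow> z \<in> Op p" for z T p
    using Rsub[of T] by blast
  have RnO: "z \<in> R T \<Longrightarrow> p \<in> F - T \<Longrightarrow> z \<notin> X closure_of Op p" for z T p
    using Rsub[of T] by blast
  have Osub: "Op p \<subseteq> topspace X" for p using OOpen openin_subset by blast
  have Ocl: "Op p \<subseteq> X closure_of Op p" for p using closure_of_subset[OF Osub] .
  have Rdisj: "T = T'" if "T \<subseteq> F" "T' \<subseteq> F" "z \<in> R T" "z \<in> R T'" for T T' z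
  proof (rule ccontr)
    assume "T \<noteq> T'"
    then obtain p where p0: "(p \<in> T) \<noteq> (p \<in> T')" unfolding set_eq_iff by blast
    then have "(p \<in> T \<and> p \<in> F - T') \<or> (p \<in> T' \<and> p \<in> F - T)" using that(1,2) by blast
    then show False
    proof
      assume p: "p \<in> T \<and> p \<in> F - T'"
      have "z \<in> Op p" using RO[OF that(3)] p by blast
      moreover have "z \<notin> X closure_of Op p" using RnO[OF that(4)] p by blast
      ultimately show False using Ocl[of p] by blast
    next
      assume p: "p \<in> T' \<and> p \<in> F - T"
      have "z \<in> Op p" using RO[OF that(4)] p by blast
      moreover have "z \<notin> X closure_of Op p" using RnO[OF that(3)] p by blast
      ultimately show False using Ocl[of p] by blast
    qed
  qed
  have good: "\<exists>T. T \<subseteq> F \<and> x \<in> X closure_of R T \<and> (x \<in> F \<longrightarrow> x \<in> T)" if x: "x \<in> topspace X" for x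
  proof -
    define B where "B = {T. T \<subseteq> F \<and> x \<notin> X closure_of R T}"
    define C where "C = (\<lambda>T. X closure_of R T) ` B"
    define N where "N = topspace X - \<Union>C"
    have "B \<subseteq> Pow F" unfolding B_def by blast
    then have "finite B" using finite_subset F(1) by blast
    then have "finite C" unfolding C_def by (rule finite_imageI)
    moreover have "\<And>S. S \<in> C \<Longrightarrow> closedin X S" unfolding C_def by auto
    ultimately have "closedin X (\<Union>C)" by (rule closedin_Union)
    then have Nopen: "openin X N" unfolding N_def by (rule openin_diff[OF openin_topspace])
    have "x \<notin> \<Union>C" unfolding C_def B_def by auto
    then have xN: "x \<in> N" unfolding N_def using x by blast
    obtain G where G: "openin X G" "G \<noteq> {}" "G \<subseteq> N" "x \<in> F \<longrightarrow> G \<subseteq> Op x"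
    proof (cases "x \<in> F")
      case True
      then have "quasi_continuous_at X Z g x" using g x unfolding quasi_continuous_def by blast
      moreover have "openin Z (U x) \<and> g x \<in> U x" using U[OF True] .
      ultimately obtain G where G: "openin X G" "G \<noteq> {}" "G \<subseteq> N" "g ` G \<subseteq> U x"
        using Nopen xN unfolding quasi_continuous_at_def by blast
      have "G \<subseteq> topspace X" using openin_subset[OF G(1)] .
      then have "G \<subseteq> {z \<in> topspace X. g z \<in> U x}" using G(4) by blast
      then have "G \<subseteq> Op x" unfolding Op_def using G(1) by (rule interior_of_maximal)
      then show ?thesis using that G(1-3) by blast
    next
      case False
      then show ?thesis using that[of N] Nopen xN by blast
    qed
    obtain T H where TH: "T \<subseteq> F" "openin X H" "H \<noteq> {}" "H \<subseteq> G"
      "\<forall>p\<in>T. H \<subseteq> Op p" "\<forall>p\<in>F-T. H \<inter> X closure_of (Op p) = {}"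
      using split_lemma[of F X Op G, OF F(1) OOpen G(1) G(2)] by blast
    have "H \<subseteq> {x\<in>topspace X. (\<forall>p\<in>T. x \<in> Op p) \<and> (\<forall>p\<in>F-T. x \<notin> X closure_of Op p)}"
      using TH(5,6) openin_subset[OF TH(2)] by blast
    then have HR: "H \<subseteq> R T" unfolding R_def using TH(2) by (rule interior_of_maximal)
    have "T \<notin> B"
    proof
      assume TB: "T \<in> B"
      have "H \<subseteq> N" using TH(4) G(3) by (rule order_trans)
      moreover have "X closure_of R T \<in> C" unfolding C_def using TB by (rule imageI)
      ultimately have "H \<inter> X closure_of R T = {}" unfolding N_def by blast
      moreover have "R T \<subseteq> X closure_of R T"
        using closure_of_subset[OF openin_subset[OF Ropen]] .
      ultimately show False using HR TH(3) by blast
    qed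
    then have xT: "x \<in> X closure_of R T" unfolding B_def using TH(1) by blast
    moreover have "x \<in> F \<longrightarrow> x \<in> T"
    proof
      assume xF: "x \<in> F"
      show "x \<in> T"
      proof (rule ccontr)
        assume "x \<notin> T"
        then have "H \<inter> X closure_of (Op x) = {}" using TH(6) xF by blast
        moreover have "H \<subseteq> Op x" using G(4) xF TH(4) by blast
        ultimately show False using TH(3) Ocl[of x] by blast
      qed
    qed
    ultimately show ?thesis using TH(1) by blast
  qed
  define T where "T x = (SOME T. T \<subseteq> F \<and> x \<in> X closure_of R T \<and> (x \<in> F \<longrightarrow> x \<in> T))" for x
  have T: "T x \<subseteq> F \<and> x \<in> X closure_of R (T x) \<and> (x \<in> F \<longrightarrow> x \<in> T x)" if "x \<in> topspace X" for x
    unfolding T_def using someI_ex[OF good[OF that]] .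
  define y where "y S = (SOME y. y \<in> topspace Y \<and> (\<forall>p\<in>S. r y \<in> U p))" for S
  have y: "y S \<in> topspace Y \<and> (\<forall>p\<in>S. r (y S) \<in> U p)" if ne: "R S \<noteq> {}" for S
  proof -
    obtain z where z: "z \<in> R S" using ne by blast
    have zX: "z \<in> topspace X" using z openin_subset[OF Ropen] by blast
    have gz: "g z \<in> topspace Z" using g zX unfolding quasi_continuous_def by blast
    have "\<forall>p\<in>S. g z \<in> U p" using RO[OF z] unfolding Op_def using interior_of_subset by fast
    moreover obtain w where "w \<in> topspace Y" "r w = g z" using gz sr by (metis imageE)
    ultimately have "\<exists>y. y \<in> topspace Y \<and> (\<forall>p\<in>S. r y \<in> U p)" by metis
    then show ?thesis unfolding y_def by (rule someI_ex)
  qed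
  have Rne: "R (T x) \<noteq> {}" if "x \<in> topspace X" for x
    using T[OF that] by (metis closure_of_empty empty_iff)
  have Tconst: "T z = T x" if "x \<in> topspace X" "z \<in> R (T x)" for x z
  proof -
    have zX: "z \<in> topspace X" using that(2) openin_subset[OF Ropen] by blast
    have "z \<in> X closure_of R (T z)" using T[OF zX] by blast
    then have "R (T x) \<inter> R (T z) \<noteq> {}"
      using that(2) openin_Int_closure_of_eq_empty[OF Ropen[of "T x"], of "R (T z)"] by blast
    then obtain w where "w \<in> R (T z)" "w \<in> R (T x)" by blast
    then show ?thesis using Rdisj[of "T z" "T x" w] T[OF zX] T[OF that(1)] by blast
  qed
  define f where "f x = (if x \<in> topspace X then y (T x) else undefined)" for x
  have fY: "f \<in> topspace X \<rightarrow> topspace Y" unfolding f_def using y Rne by auto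
  have "quasi_continuous_at X Y f x" if x: "x \<in> topspace X" for x
    unfolding quasi_continuous_at_def
  proof (intro allI impI)
    fix V W assume VW: "openin X V \<and> x \<in> V \<and> openin Y W \<and> f x \<in> W"
    let ?G = "V \<inter> R (T x)"
    have "?G \<noteq> {}"
      using T[OF x] VW openin_Int_closure_of_eq_empty[of X V "R (T x)"] by blast
    moreover have "openin X ?G" using VW Ropen by blast
    moreover have "f ` ?G \<subseteq> W"
    proof
      fix w assume "w \<in> f ` ?G"
      then obtain z where z: "z \<in> ?G" "w = f z" by blast
      have zX: "z \<in> topspace X" using z openin_subset[OF Ropen] by blast
      have "f z = f x" unfolding f_def using zX x Tconst[OF x] z by simp
      then show "w \<in> W" using z VW by simp
    qed
    ultimately show "\<exists>G. openin X G \<and> G \<noteq> {} \<and> G \<subseteq> V \<and> f ` G \<subseteq> W" by blast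
  qed
  then have "quasi_continuous X Y f" unfolding quasi_continuous_def using fY by blast
  moreover have "f \<in> extensional (topspace X)" unfolding f_def extensional_def by simp
  moreover have "\<forall>p\<in>F. r (f p) \<in> U p"
  proof
    fix p assume p: "p \<in> F"
    then have pX: "p \<in> topspace X" using F by blast
    show "r (f p) \<in> U p" unfolding f_def using pX T[OF pX] p y[OF Rne[OF pX]] by simp
  qed
  ultimately show ?thesis by blast
qed

lemma induced_QC:
  assumes r: "continuous_map Y Z r" and f: "f \<in> QC X Y"
  shows "induced_map X r f \<in> QC X Z"
proof -
  let ?h = "induced_map X r f"
  have fq: "quasi_continuous X Y f" using f unfolding QC_def by blast
  have fY: "f \<in> topspace X \<rightarrow> topspace Y" using fq unfolding quasi_continuous_def by blast
  have hZ: "?h \<in> topspace X \<rightarrow> topspace Z"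
    using fY r unfolding induced_map_def by (auto simp: continuous_map_def)
  have "quasi_continuous_at X Z ?h x" if x: "x \<in> topspace X" for x
    unfolding quasi_continuous_at_def
  proof (intro allI impI)
    fix V W assume VW: "openin X V \<and> x \<in> V \<and> openin Z W \<and> ?h x \<in> W"
    let ?W = "{y \<in> topspace Y. r y \<in> W}"
    have "openin Y ?W" using r VW by (simp add: continuous_map_def)
    moreover have "f x \<in> ?W" using VW x fY unfolding induced_map_def by auto
    moreover have "quasi_continuous_at X Y f x" using fq x unfolding quasi_continuous_def by blast
    ultimately obtain G where G: "openin X G" "G \<noteq> {}" "G \<subseteq> V" "f ` G \<subseteq> ?W"
      using VW unfolding quasi_continuous_at_def by blast
    have "?h ` G \<subseteq> W" using G openin_subset[OF G(1)] unfolding induced_map_def by auto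
    then show "\<exists>G. openin X G \<and> G \<noteq> {} \<and> G \<subseteq> V \<and> ?h ` G \<subseteq> W" using G by blast
  qed
  then show ?thesis using hZ unfolding QC_def quasi_continuous_def induced_map_def by auto
qed

theorem mainTheorem12:
  fixes X :: "'a topology" and Y :: "'b topology" and Z :: "'c topology"
    and r :: "'b \<Rightarrow> 'c"
  assumes "continuous_map Y Z r"
    and "r ` topspace Y = topspace Z"
  shows "(QP X Z) closure_of (induced_map X r ` QC X Y) = topspace (QP X Z)"
proof
  show "(QP X Z) closure_of (induced_map X r ` QC X Y) \<subseteq> topspace (QP X Z)"
    by (rule closure_of_subset_topspace)
next
  have top: "topspace (QP X Z) = QC X Z"
    unfolding QP_def QC_def quasi_continuous_def
    by (auto simp: topspace_subtopology topspace_product_topology PiE_iff extensional_def)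
  show "topspace (QP X Z) \<subseteq> (QP X Z) closure_of (induced_map X r ` QC X Y)"
  proof
    fix g assume g: "g \<in> topspace (QP X Z)"
    then have gQ: "g \<in> QC X Z" using top by simp
    have gq: "quasi_continuous X Z g" using gQ unfolding QC_def by blast
    show "g \<in> (QP X Z) closure_of (induced_map X r ` QC X Y)"
      unfolding in_closure_of
    proof (intro conjI allI impI)
      show "g \<in> topspace (QP X Z)" by fact
      fix S assume S: "g \<in> S \<and> openin (QP X Z) S"
      then obtain S' where S': "openin (product_topology (\<lambda>_. Z) (topspace X)) S'" "S = S' \<inter> QC X Z"
        unfolding QP_def openin_subtopology by blast
      then obtain U where U: "finite {i \<in> topspace X. U i \<noteq> topspace Z}"
        "\<forall>i \<in> topspace X. openin Z (U i)" "g \<in> Pi\<^sub>E (topspace X) U" "Pi\<^sub>E (topspace X) U \<subseteq> S'"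
        using S unfolding openin_product_topology_alt by blast
      define F where "F = {i \<in> topspace X. U i \<noteq> topspace Z}"
      have "\<exists>f. quasi_continuous X Y f \<and> f \<in> extensional (topspace X) \<and> (\<forall>p\<in>F. r (f p) \<in> U p)"
        using U(3) U(2) U(1) unfolding F_def
        by (intro approx[OF gq assms]) (auto simp: PiE_iff)
      then obtain f where f: "quasi_continuous X Y f" "f \<in> extensional (topspace X)" "\<forall>p\<in>F. r (f p) \<in> U p"
        by blast
      have fQ: "f \<in> QC X Y" using f unfolding QC_def by blast
      have fY: "f \<in> topspace X \<rightarrow> topspace Y" using f unfolding quasi_continuous_def by blast
      have "induced_map X r f \<in> Pi\<^sub>E (topspace X) U"
      proof -
        have "r (f x) \<in> U x" if x: "x \<in> topspace X" for x
        proof (cases "x \<in> F")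
          case True then show ?thesis using f by blast
        next
          case False
          then have "U x = topspace Z" using x unfolding F_def by blast
          then show ?thesis using fY x assms(1) by (auto simp: continuous_map_def)
        qed
        then show ?thesis unfolding induced_map_def by (auto simp: PiE_iff)
      qed
      then have "induced_map X r f \<in> S" using U(4) S' induced_QC[OF assms(1) fQ] by blast
      then show "\<exists>y. y \<in> induced_map X r ` QC X Y \<and> y \<in> S" using fQ by blast
    qed
  qed
qed

end
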